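(* Let $p,q,d,n$ be positive integers with $p>2q$ and $d\ge 3$, let $s$ be a special vertex of $U^n_{p,q,d}$ and let $\ell$ be an integer with $1\le \ell\le \bigl\lceil \tfrac{q}{p-2q}\bigr\rceil-1$. Then the set of vertices of $U^n_{p,q,d}$ at distance exactly $\ell$ from $s$ is an independent set.
   Context: For integers $1\le q\le p$, the Kneser graph $K_{p/q}$ has as vertices all $q$-element subsets of $[p]=\{1,\dots,p\}$, two being adjacent iff they are disjoint. The extension product of graphs $G$ and $H$ has vertex set $V(G)\times V(H)$, with $(u,v)$ adjacent to $(u',v')$ iff $uu'\in E(G)$ and either $v=v'$ or $vv'\in E(H)$. Let $N=n\binom{p}{q}$. If $d$ is even, let $S$ be the star $K_{1,N}$ with each edge subdivided $d/2-1$ times, and let $U^n_{p,q,d}$ be the extension product of $K_{p/q}$ and $S$. If $d$ is odd, let $L$ be the graph obtained from the clique $K_N$ by identifying each clique vertex with one endpoint of its own path on $(d+1)/2$ vertices (the other endpoints being the leaves of $L$), and let $U^n_{p,q,d}$ be the extension product of $K_{p/q}$ and $L$. In both cases the $N$ leaves $\lambda$ of $S$ (resp. $L$) are partitioned into $\binom pq$ groups of $n$ leaves indexed by the $q$-subsets $X$ of $[p]$, and for each leaf $\lambda$ in the group of $X$ the vertex $(X,\lambda)$ is called special. *)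

theory Defs
  imports Complex_Main
begin

definition walk :: "'a set \<Rightarrow> ('a \<Rightarrow> 'a \<Rightarrow> bool) \<Rightarrow> 'a list \<Rightarrow> bool" where
  "walk V E xs \<longleftrightarrow> xs \<noteq> [] \<and> set xs \<subseteq> V \<and>
     (\<forall>i < length xs - 1. E (xs ! i) (xs ! Suc i))"

definition dist_eq :: "'a set \<Rightarrow> ('a \<Rightarrow> 'a \<Rightarrow> bool) \<Rightarrow> 'a \<Rightarrow> 'a \<Rightarrow> nat \<Rightarrow> bool" where
  "dist_eq V E u v k \<longleftrightarrow>
     (\<exists>xs. walk V E xs \<and> hd xs = u \<and> last xs = v \<and> length xs = Suc k) \<and>
     (\<forall>xs. walk V E xs \<and> hd xs = u \<and> last xs = v \<longrightarrow> Suc k \<le> length xs)"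

definition independent_set :: "'a set \<Rightarrow> ('a \<Rightarrow> 'a \<Rightarrow> bool) \<Rightarrow> 'a set \<Rightarrow> bool" where
  "independent_set V E A \<longleftrightarrow> A \<subseteq> V \<and> (\<forall>x\<in>A. \<forall>y\<in>A. \<not> E x y)"

definition kneser_verts :: "nat \<Rightarrow> nat \<Rightarrow> nat set set" where
  "kneser_verts p q = {X. X \<subseteq> {1..p} \<and> card X = q}"

definition kneser_adj :: "nat set \<Rightarrow> nat set \<Rightarrow> bool" where
  "kneser_adj X Y \<longleftrightarrow> X \<inter> Y = {}"

text \<open>The N = n * (p choose q) leaves are indexed by pairs (X,k) with X a q-subset of [p]
  and k < n; the leaf (X,k) belongs to the group of X.  A vertex Some((X,k),j) is the
  j-th vertex (j >= 1) on the branch/path ending at leaf (X,k); None is the centre of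
  the star (d even only).\<close>

type_synonym tvert = "((nat set \<times> nat) \<times> nat) option"

definition leafpos :: "nat \<Rightarrow> nat" where
  "leafpos d = (if even d then d div 2 else (d + 1) div 2)"

definition T_verts :: "nat \<Rightarrow> nat \<Rightarrow> nat \<Rightarrow> nat \<Rightarrow> tvert set" where
  "T_verts p q n d =
     (if even d then {None} else {}) \<union>
     {Some ((X, k), j) | X k j. X \<in> kneser_verts p q \<and> k < n \<and> 1 \<le> j \<and> j \<le> leafpos d}"

definition path_adj :: "tvert \<Rightarrow> tvert \<Rightarrow> bool" where
  "path_adj a b \<longleftrightarrow> (\<exists>i j. (a = Some (i, j) \<and> b = Some (i, Suc j)) \<or>
                             (a = Some (i, Suc j) \<and> b = Some (i, j)))"

definition star_adj :: "tvert \<Rightarrow> tvert \<Rightarrow> bool" where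
  "star_adj a b \<longleftrightarrow> (a = None \<and> (\<exists>i. b = Some (i, 1))) \<or> (b = None \<and> (\<exists>i. a = Some (i, 1)))"

definition clique_adj :: "tvert \<Rightarrow> tvert \<Rightarrow> bool" where
  "clique_adj a b \<longleftrightarrow> (\<exists>i i'. i \<noteq> i' \<and> a = Some (i, 1) \<and> b = Some (i', 1))"

definition T_adj :: "nat \<Rightarrow> tvert \<Rightarrow> tvert \<Rightarrow> bool" where
  "T_adj d a b \<longleftrightarrow> path_adj a b \<or> (if even d then star_adj a b else clique_adj a b)"

definition U_verts :: "nat \<Rightarrow> nat \<Rightarrow> nat \<Rightarrow> nat \<Rightarrow> (nat set \<times> tvert) set" where
  "U_verts p q n d = kneser_verts p q \<times> T_verts p q n d"

definition U_adj :: "nat \<Rightarrow> nat set \<times> tvert \<Rightarrow> nat set \<times> tvert \<Rightarrow> bool" where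
  "U_adj d x y \<longleftrightarrow> kneser_adj (fst x) (fst y) \<and> (snd x = snd y \<or> T_adj d (snd x) (snd y))"

definition special :: "nat \<Rightarrow> nat \<Rightarrow> nat \<Rightarrow> nat \<Rightarrow> nat set \<times> tvert \<Rightarrow> bool" where
  "special p q n d s \<longleftrightarrow>
     (\<exists>X k. X \<in> kneser_verts p q \<and> k < n \<and> s = (X, Some ((X, k), leafpos d)))"

end

theory Submission
  imports Defs
begin

lemma kn_step:
  fixes A B C D :: "nat set"
  assumes "A \<subseteq> {1..p}" "B \<subseteq> {1..p}" "C \<subseteq> {1..p}" "D \<subseteq> {1..p}"
    and "card B = q" "card C = q" "card D = q" "B \<inter> D = {}" "C \<inter> D = {}"
  shows "card (A \<inter> B) \<le> card (A \<inter> C) + (p - 2 * q)"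
proof -
  have fin: "finite A" "finite B" "finite C" "finite D"
    using assms(1-4) finite_subset by blast+
  have "A \<inter> B \<subseteq> (A \<inter> C) \<union> (B - C)" by blast
  hence "card (A \<inter> B) \<le> card (A \<inter> C) + card (B - C)"
    by (meson card_Un_le card_mono fin finite_Diff finite_Int finite_UnI le_trans)
  moreover have "card (B - C) \<le> p - 2 * q"
  proof -
    have "B \<union> C \<subseteq> {1..p} - D" using assms by blast
    hence "card (B \<union> C) \<le> p - q"
      using card_mono[of "{1..p} - D" "B \<union> C"] card_Diff_subset[OF fin(4) assms(4)] assms(7) by simp
    moreover have "card (B \<union> C) = card (B - C) + card C"
      using fin by (metis Un_Diff_cancel2 card_Un_disjoint Diff_disjoint inf_commute finite_Diff)
    ultimately show ?thesis using assms by simp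
  qed
  ultimately show ?thesis by simp
qed

lemma kn_chain:
  fixes f :: "nat \<Rightarrow> nat set"
  assumes V: "\<And>i. i \<le> m \<Longrightarrow> f i \<subseteq> {1..p} \<and> card (f i) = q"
    and E: "\<And>i. i < m \<Longrightarrow> f i \<inter> f (Suc i) = {}"
  shows "2 * j \<le> m \<Longrightarrow> int q \<le> int (card (f 0 \<inter> f (2 * j))) + int j * int (p - 2 * q)"
proof (induction j)
  case 0
  have "card (f 0 \<inter> f 0) = q" using V[of 0] by simp
  then show ?case by simp
next
  case (Suc j)
  have "card (f 0 \<inter> f (2*j)) \<le> card (f 0 \<inter> f (2*j+2)) + (p - 2*q)"
    apply (rule kn_step[where D = "f (2*j+1)"])
    using V[of 0] V[of "2*j"] V[of "2*j+1"] V[of "2*j+2"] Suc.prems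
      E[of "2*j"] E[of "2*j+1"] by (auto simp: Int_commute)
  with Suc show ?case by (simp add: algebra_simps)
qed

lemma kn_odd:
  fixes f :: "nat \<Rightarrow> nat set"
  assumes V: "\<And>i. i \<le> 2*l+1 \<Longrightarrow> f i \<subseteq> {1..p} \<and> card (f i) = q"
    and E: "\<And>i. i < 2*l+1 \<Longrightarrow> f i \<inter> f (Suc i) = {}"
    and cl: "f (2*l+1) = f 0"
  shows "q \<le> l * (p - 2 * q)"
proof -
  have "int q \<le> int (card (f 0 \<inter> f (2 * l))) + int l * int (p - 2 * q)"
    using kn_chain[of "2*l+1" f p q l, OF V E] by auto
  moreover have "f 0 \<inter> f (2*l) = {}" using E[of "2*l"] cl by auto
  ultimately have "int q \<le> int l * int (p - 2 * q)" by (simp only: card.empty of_nat_0 add_0)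
  thus ?thesis by (metis of_nat_le_iff of_nat_mult)
qed

theorem mainTheorem4:
  fixes p q d n l :: nat and s :: "nat set \<times> tvert"
  assumes "0 < p" "0 < q" "0 < d" "0 < n"
    and "2 * q < p" and "3 \<le> d"
    and "special p q n d s"
    and "1 \<le> l" and "int l \<le> \<lceil>real q / real (p - 2 * q)\<rceil> - 1"
  shows "independent_set (U_verts p q n d) (U_adj d)
           {v \<in> U_verts p q n d. dist_eq (U_verts p q n d) (U_adj d) s v l}"
  unfolding independent_set_def
proof (intro conjI ballI)
  show "{v \<in> U_verts p q n d. dist_eq (U_verts p q n d) (U_adj d) s v l} \<subseteq> U_verts p q n d"
    by blast
next
  fix v w assume vA: "v \<in> {v \<in> U_verts p q n d. dist_eq (U_verts p q n d) (U_adj d) s v l}"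
    and wA: "w \<in> {v \<in> U_verts p q n d. dist_eq (U_verts p q n d) (U_adj d) s v l}"
  show "\<not> U_adj d v w"
  proof
    assume adj: "U_adj d v w"
    obtain xs where xs: "walk (U_verts p q n d) (U_adj d) xs" "hd xs = s" "last xs = v" "length xs = Suc l"
      using vA unfolding dist_eq_def by blast
    obtain ys where ys: "walk (U_verts p q n d) (U_adj d) ys" "hd ys = s" "last ys = w" "length ys = Suc l"
      using wA unfolding dist_eq_def by blast
    define f where "f i = (if i \<le> l then fst (xs ! i) else fst (ys ! (2*l+1-i)))" for i
    have xsV: "\<And>i. i \<le> l \<Longrightarrow> xs ! i \<in> U_verts p q n d"
      using xs(1,4) unfolding walk_def by (metis in_mono less_Suc_eq_le nth_mem)
    have ysV: "\<And>i. i \<le> l \<Longrightarrow> ys ! i \<in> U_verts p q n d"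
      using ys(1,4) unfolding walk_def by (metis in_mono less_Suc_eq_le nth_mem)
    have xsE: "\<And>i. i < l \<Longrightarrow> U_adj d (xs ! i) (xs ! Suc i)"
      using xs(1,4) unfolding walk_def by auto
    have ysE: "\<And>i. i < l \<Longrightarrow> U_adj d (ys ! i) (ys ! Suc i)"
      using ys(1,4) unfolding walk_def by auto
    have xl: "xs ! l = v" using xs(3,4) by (metis diff_Suc_1 last_conv_nth list.size(3) nat.distinct(1))
    have yl: "ys ! l = w" using ys(3,4) by (metis diff_Suc_1 last_conv_nth list.size(3) nat.distinct(1))
    have x0: "xs ! 0 = s" using xs(2,4) by (metis hd_conv_nth list.size(3) nat.distinct(1))
    have y0: "ys ! 0 = s" using ys(2,4) by (metis hd_conv_nth list.size(3) nat.distinct(1))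
    have Vf: "f i \<subseteq> {1..p} \<and> card (f i) = q" if "i \<le> 2*l+1" for i
    proof -
      have "f i \<in> kneser_verts p q"
      proof (cases "i \<le> l")
        case True thus ?thesis using xsV[of i] unfolding f_def U_verts_def by (simp add: mem_Times_iff)
      next
        case False
        hence "2*l+1-i \<le> l" by linarith
        thus ?thesis using False ysV[of "2*l+1-i"] unfolding f_def U_verts_def by (simp add: mem_Times_iff)
      qed
      thus ?thesis unfolding kneser_verts_def by auto
    qed
    have Ef: "f i \<inter> f (Suc i) = {}" if "i < 2*l+1" for i
    proof -
      consider "i < l" | "i = l" | "l < i" by linarith
      thus ?thesis
      proof cases
        case 1 thus ?thesis using xsE[of i] unfolding f_def U_adj_def kneser_adj_def by auto
      next
        case 2 thus ?thesis using adj xl yl unfolding f_def U_adj_def kneser_adj_def by auto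
      next
        case 3
        define k where "k = 2*l - i"
        have k: "2*l+1-i = Suc k" "k < l" "2*l+1 - Suc i = k" using 3 that unfolding k_def by arith+
        thus ?thesis using 3 ysE[of k] unfolding f_def U_adj_def kneser_adj_def by (auto simp: Int_commute)
      qed
    qed
    have cl: "f (2*l+1) = f 0" using x0 y0 unfolding f_def by simp
    have "q \<le> l * (p - 2 * q)" by (rule kn_odd[OF Vf Ef cl])
    moreover have "real l < real q / real (p - 2 * q)"
    proof (rule ccontr)
      assume "\<not> real l < real q / real (p - 2 * q)"
      hence "\<lceil>real q / real (p - 2 * q)\<rceil> \<le> int l" by (simp add: ceiling_le_iff)
      thus False using assms(9) by linarith
    qed
    hence "real l * real (p - 2*q) < real q" using assms(5) by (simp add: field_simps)
    hence "l * (p - 2*q) < q" by (metis of_nat_less_iff of_nat_mult)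
    ultimately show False by simp
  qed
qed

end
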